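(* Let $\mathcal{R}$ be a 2-torsion free unital prime ring containing a nontrivial idempotent $P$ (i.e. $P^2=P$, $P\neq0$, $P\neq I$). If $\phi:\mathcal{R}\to\mathcal{R}$ is an additive mapping such that $\phi(A)\circ B+A\circ\phi(B)=0$ for all $A,B\in\mathcal{R}$ with $AB=BA=0$, then there exist a derivation $\delta:\mathcal{R}\to\mathcal{R}$ and a multiplier $\eta:\mathcal{R}\to\mathcal{R}$ such that $\phi=\delta+\eta$. If moreover $\phi(I)=0$, then $\phi$ is a derivation.
   Context: A ring $\mathcal{R}$ is prime if $A\mathcal{R}B=\{0\}$ implies $A=0$ or $B=0$. 2-torsion free: $2X=0\Rightarrow X=0$. $X\circ Y=XY+YX$. An additive $\delta$ is a derivation if $\delta(XY)=\delta(X)Y+X\delta(Y)$; an additive $\eta$ is a multiplier if $\eta(X)=\eta(I)X=X\eta(I)$ for all $X$. *)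

theory Defs
  imports Main
begin

definition prime_ring :: "'a::ring_1 itself \<Rightarrow> bool" where
  "prime_ring _ \<longleftrightarrow> (\<forall>A B :: 'a. (\<forall>X. A * X * B = 0) \<longrightarrow> A = 0 \<or> B = 0)"

definition two_torsion_free :: "'a::ring_1 itself \<Rightarrow> bool" where
  "two_torsion_free _ \<longleftrightarrow> (\<forall>X :: 'a. 2 * X = 0 \<longrightarrow> X = 0)"

definition jordan_prod :: "'a::ring \<Rightarrow> 'a \<Rightarrow> 'a" (infixl "\<circ>\<^sub>J" 70) where
  "X \<circ>\<^sub>J Y = X * Y + Y * X"

definition additive :: "('a::ring \<Rightarrow> 'a) \<Rightarrow> bool" where
  "additive f \<longleftrightarrow> (\<forall>X Y. f (X + Y) = f X + f Y)"

definition is_derivation :: "('a::ring \<Rightarrow> 'a) \<Rightarrow> bool" where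
  "is_derivation d \<longleftrightarrow> additive d \<and> (\<forall>X Y. d (X * Y) = d X * Y + X * d Y)"

definition is_multiplier :: "('a::ring_1 \<Rightarrow> 'a) \<Rightarrow> bool" where
  "is_multiplier e \<longleftrightarrow> additive e \<and> (\<forall>X. e X = e 1 * X \<and> e X = X * e 1)"

end

theory Submission imports Defs begin

definition zj :: "('a::ring \<Rightarrow> 'a) \<Rightarrow> bool" where
  "zj d \<longleftrightarrow> (\<forall>A B. A*B = 0 \<and> B*A = 0 \<longrightarrow> d A * B + B * d A + (A * d B + d B * A) = 0)"

locale pb =
  fixes P Q :: "'a::ring_1"
  assumes idem: "P*P = P" and Qdef: "Q = 1 - P"
    and Pnz: "P \<noteq> 0" and Qnz: "Q \<noteq> 0"
    and tf: "two_torsion_free TYPE('a)" and pr: "prime_ring TYPE('a)"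
begin

lemma PQ1: "P + Q = 1" by (simp add: Qdef)
lemma QQ: "Q*Q = Q" by (simp add: Qdef algebra_simps idem)
lemma PQ0: "P*Q = 0" by (simp add: Qdef algebra_simps idem)
lemma QP0: "Q*P = 0" by (simp add: Qdef algebra_simps idem)

lemma pq[simp]: "P*P = P" "P*(P*z) = P*z" "Q*Q = Q" "Q*(Q*z) = Q*z" "P*Q = 0" "P*(Q*z) = 0"
  "Q*P = 0" "Q*(P*z) = 0"
  by (simp_all add: idem QQ PQ0 QP0 mult.assoc[symmetric])

lemma swap: "pb Q P"
proof
  show "Q*Q = Q" by (rule QQ)
  show "P = 1 - Q" by (simp add: Qdef)
qed (use Pnz Qnz tf pr in auto)

lemma tf2: "a + a = 0 \<Longrightarrow> a = (0::'a)"
  using tf unfolding two_torsion_free_def by (metis mult_2)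

lemma prime: "(\<And>X. a*X*b = 0) \<Longrightarrow> a = 0 \<or> b = (0::'a)"
  using pr unfolding prime_ring_def by blast

lemma dec: "a = P*a*P + P*a*Q + Q*a*P + Q*a*Q"
proof -
  have "a = (P+Q)*a*(P+Q)" by (simp add: PQ1)
  thus ?thesis by (simp add: algebra_simps)
qed

lemma primeQ: "(\<And>X. c*X*Q = 0) \<Longrightarrow> c = 0" using prime Qnz by blast
lemma primeP: "(\<And>X. c*X*P = 0) \<Longrightarrow> c = 0" using prime Pnz by blast

end

locale pd = pb P Q for P Q :: "'a::ring_1" +
  fixes d :: "'a \<Rightarrow> 'a"
  assumes add: "additive d" and zjd: "zj d"
begin

lemma dadd: "d (a + b) = d a + d b" using add unfolding additive_def by blast
lemma d0[simp]: "d 0 = 0" using dadd[of 0 0] by simp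
lemma dneg: "d (- a) = - d a" using dadd[of a "-a"] minus_unique[of "d a" "d (-a)"] by simp
lemma ddiff: "d (a - b) = d a - d b" using dadd[of a "-b"] dneg by simp

lemma cnd: "A*B = 0 \<Longrightarrow> B*A = 0 \<Longrightarrow> d A * B + B * d A + (A * d B + d B * A) = 0"
  using zjd unfolding zj_def by blast

lemma swapd: "pd Q P d"
  using swap add zjd by (simp add: pd_def pd_axioms_def)

end

context pb begin
lemma yQ: assumes "y*Q + Q*y = 0" shows "y = P*y*P"
proof -
  have "Q*(y*Q + Q*y)*Q = 0" "P*(y*Q + Q*y)*Q = 0" "Q*(y*Q + Q*y)*P = 0" using assms by simp_all
  hence a: "Q*y*Q + Q*y*Q = 0" and b: "P*y*Q = 0" and c: "Q*y*P = 0"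
    by (simp_all add: algebra_simps)
  from tf2[OF a] have "Q*y*Q = 0" .
  with b c dec[of y] show ?thesis by simp
qed
end

locale pdz = pd +
  assumes dP: "d P = 0" and dQ: "d Q = 0"
begin

lemma swapz: "pdz Q P d"
  using swapd dP dQ by (simp add: pdz_def pdz_axioms_def)

lemma L1: "d (P*r*P) = P * d (P*r*P) * P"
proof -
  have "d (P*r*P) * Q + Q * d (P*r*P) = 0"
    using cnd[of "P*r*P" Q] dQ by (simp add: mult.assoc)
  thus ?thesis by (rule yQ)
qed

lemma L2: "d (P*r*Q) = P * d (P*r*Q) * Q"
proof -
  define y where "y = d (P*r*Q)"
  have h2: "y*(P*r*Q) + (P*r*Q)*y + ((P*r*Q)*y + y*(P*r*Q)) = 0"
    using cnd[of "P*r*Q" "P*r*Q"] unfolding y_def by (simp add: mult.assoc)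
  have "P*(y*(P*r*Q) + (P*r*Q)*y + ((P*r*Q)*y + y*(P*r*Q)))*P = 0" using h2 by simp
  moreover have "P*(y*(P*r*Q) + (P*r*Q)*y + ((P*r*Q)*y + y*(P*r*Q)))*P = P*r*Q*y*P + P*r*Q*y*P"
    by (simp add: algebra_simps)
  ultimately have ii1: "P*r*Q*y*P = 0" using tf2 by metis
  have "Q*(y*(P*r*Q) + (P*r*Q)*y + ((P*r*Q)*y + y*(P*r*Q)))*Q = 0" using h2 by simp
  moreover have "Q*(y*(P*r*Q) + (P*r*Q)*y + ((P*r*Q)*y + y*(P*r*Q)))*Q = Q*y*P*r*Q + Q*y*P*r*Q"
    by (simp add: algebra_simps)
  ultimately have ii2: "Q*y*P*r*Q = 0" using tf2 by metis
  have dE: "d (P + P*r*Q) = y" using dP by (simp add: dadd y_def)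
  have dF: "d (Q - P*r*Q) = - y" using dQ by (simp add: ddiff y_def)
  have h1: "y*(Q - P*r*Q) + (Q - P*r*Q)*y + ((P + P*r*Q)*(-y) + (-y)*(P + P*r*Q)) = 0"
    using cnd[of "P + P*r*Q" "Q - P*r*Q"] dE dF by (simp add: algebra_simps)
  let ?S = "y*(Q - P*r*Q) + (Q - P*r*Q)*y + ((P + P*r*Q)*(-y) + (-y)*(P + P*r*Q))"
  have e1: "P*?S*P = - ((P*y*P + P*r*Q*y*P) + (P*y*P + P*r*Q*y*P))"
    by (simp add: algebra_simps)
  have "P*?S*P = 0" using h1 by simp
  with e1 have "(P*y*P + P*r*Q*y*P) + (P*y*P + P*r*Q*y*P) = 0" by (metis neg_equal_0_iff_equal)
  with ii1 have "P*y*P + P*y*P = 0" by simp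
  hence i1: "P*y*P = 0" by (rule tf2)
  have "Q*?S*Q = (Q*y*Q - Q*y*P*r*Q) + (Q*y*Q - Q*y*P*r*Q)"
    by (simp add: algebra_simps)
  with h1 ii2 have "Q*y*Q + Q*y*Q = 0" by simp
  hence i2: "Q*y*Q = 0" by (rule tf2)
  have iv: "Q * d (P*r*Q*(Q*s*Q)) * P = Q*s*Q*y*P" for s
  proof -
    obtain b0 where hb: "d (Q*s*Q) = Q*b0*Q" using pdz.L1[OF swapz, of s] by blast
    define v where "v = d (P*r*Q*(Q*s*Q))"
    have dA: "d (P + P*r*Q) = y" using dP by (simp add: dadd y_def)
    have dB: "d (Q*s*Q - P*r*Q*(Q*s*Q)) = Q*b0*Q - v" by (simp add: ddiff hb v_def)
    have AB: "(P + P*r*Q)*(Q*s*Q - P*r*Q*(Q*s*Q)) = 0" by (simp add: algebra_simps)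
    have BA: "(Q*s*Q - P*r*Q*(Q*s*Q))*(P + P*r*Q) = 0" by (simp add: algebra_simps)
    note h = cnd[OF AB BA, unfolded dA dB]
    let ?S = "y * (Q * s * Q - P * r * Q * (Q * s * Q)) + (Q * s * Q - P * r * Q * (Q * s * Q)) * y +
    ((P + P * r * Q) * (Q * b0 * Q - v) + (Q * b0 * Q - v) * (P + P * r * Q))"
    have "Q*?S*P = Q*s*Q*y*P - Q*v*P" by (simp add: algebra_simps)
    moreover have "Q*?S*P = 0" using h by simp
    ultimately show ?thesis unfolding v_def by simp
  qed
  have iii: "P*r*Q*s*Q*y*P = 0" for s
  proof -
    define c where "c = P*r*Q*(Q*s*Q)"
    have xc: "(P*r*Q)*c = 0" "c*(P*r*Q) = 0" by (simp_all add: c_def mult.assoc)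
    note h = cnd[OF xc, folded y_def]
    have "P*(y * c + c * y + (P * r * Q * d c + d c * (P * r * Q)))*P = 0" using h by simp
    moreover have "P*(y * c + c * y + (P * r * Q * d c + d c * (P * r * Q)))*P
       = P*r*Q*s*Q*y*P + P*r*Q*(Q*d c*P)" by (simp add: algebra_simps c_def)
    moreover have "Q*d c*P = Q*s*Q*y*P" using iv[of s] by (simp add: c_def)
    ultimately have "P*r*Q*s*Q*y*P + P*r*Q*s*Q*y*P = 0" by (simp add: algebra_simps)
    thus ?thesis by (rule tf2)
  qed
  have "P*r*Q = 0 \<or> Q*y*P = 0"
  proof (rule prime)
    fix X show "P*r*Q*X*(Q*y*P) = 0" using iii[of X] by (simp add: mult.assoc)
  qed
  hence i3: "Q*y*P = 0" using y_def by auto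
  have "y = P*y*Q" using dec[of y] i1 i2 i3 by simp
  thus ?thesis unfolding y_def .
qed

end



context pdz begin

lemma T1: assumes h: "a = P*a*P" shows "d a = P * d a * P"
  using L1[of a] unfolding h[symmetric] .

lemma T2: assumes h: "x = P*x*Q" shows "d x = P * d x * Q"
  using L2[of x] unfolding h[symmetric] .

lemma L3: "d (P*r*Q*(Q*s*Q)) = d (P*r*Q) * (Q*s*Q) + P*r*Q * d (Q*s*Q)"
proof -
  obtain u0 where hu: "d (P*r*Q) = P*u0*Q" using L2 by blast
  have xb: "P*r*Q*(Q*s*Q) = P*(r*Q*s)*Q" by (simp add: mult.assoc)
  obtain v0 where hv: "d (P*r*Q*(Q*s*Q)) = P*v0*Q" using L2[of "r*Q*s"] unfolding xb by blast
  obtain b0 where hb0: "d (Q*s*Q) = Q*b0*Q" using pdz.L1[OF swapz] by blast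
  have dA: "d (P + P*r*Q) = P*u0*Q" using dP by (simp add: dadd hu)
  have dB: "d (Q*s*Q - P*r*Q*(Q*s*Q)) = Q*b0*Q - P*v0*Q" by (simp add: ddiff hb0 hv)
  have AB: "(P + P*r*Q)*(Q*s*Q - P*r*Q*(Q*s*Q)) = 0" by (simp add: algebra_simps)
  have BA: "(Q*s*Q - P*r*Q*(Q*s*Q))*(P + P*r*Q) = 0" by (simp add: algebra_simps)
  note h = cnd[OF AB BA, unfolded dA dB]
  let ?S = "P * u0 * Q * (Q*s*Q - P*r*Q*(Q*s*Q)) + (Q*s*Q - P*r*Q*(Q*s*Q)) * (P * u0 * Q) +
    ((P + P*r*Q) * (Q * b0 * Q - P * v0 * Q) + (Q * b0 * Q - P * v0 * Q) * (P + P*r*Q))"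
  have "P*?S*Q = P*u0*Q*(Q*s*Q) - P*v0*Q + P*r*Q*(Q*b0*Q)"
    by (simp add: algebra_simps)
  moreover have "P*?S*Q = 0" using h by simp
  ultimately have "P*v0*Q = P*u0*Q*(Q*s*Q) + P*r*Q*(Q*b0*Q)" by (simp add: algebra_simps)
  thus ?thesis by (simp add: hu hv hb0)
qed

lemma T3: assumes hx: "x = P*x*Q" and hb: "b = Q*b*Q"
  shows "d (x*b) = d x * b + x * d b"
  using L3[of x b] unfolding hx[symmetric] hb[symmetric] .

lemma L4: "d (P*s*P*(P*r*Q)) = d (P*s*P) * (P*r*Q) + P*s*P * d (P*r*Q)"
proof -
  obtain u0 where hu: "d (P*r*Q) = P*u0*Q" using L2 by blast
  have ax: "P*s*P*(P*r*Q) = P*(s*P*r)*Q" by (simp add: mult.assoc)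
  obtain w0 where hw: "d (P*s*P*(P*r*Q)) = P*w0*Q" using L2[of "s*P*r"] unfolding ax by blast
  obtain a0 where ha0: "d (P*s*P) = P*a0*P" using L1 by blast
  have dA: "d (P*s*P + P*s*P*(P*r*Q)) = P*a0*P + P*w0*Q" by (simp add: dadd ha0 hw)
  have dB: "d (Q - P*r*Q) = - (P*u0*Q)" using dQ by (simp add: ddiff hu)
  have AB: "(P*s*P + P*s*P*(P*r*Q))*(Q - P*r*Q) = 0" by (simp add: algebra_simps)
  have BA: "(Q - P*r*Q)*(P*s*P + P*s*P*(P*r*Q)) = 0" by (simp add: algebra_simps)
  note h = cnd[OF AB BA, unfolded dA dB]
  let ?S = "(P*a0*P + P*w0*Q) * (Q - P*r*Q) + (Q - P*r*Q) * (P*a0*P + P*w0*Q) +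
    ((P*s*P + P*s*P*(P*r*Q)) * - (P*u0*Q) + - (P*u0*Q) * (P*s*P + P*s*P*(P*r*Q)))"
  have "P*?S*Q = P*w0*Q - P*a0*P*(P*r*Q) - P*s*P*(P*u0*Q)"
    by (simp add: algebra_simps)
  moreover have "P*?S*Q = 0" using h by simp
  ultimately have "P*w0*Q = P*a0*P*(P*r*Q) + P*s*P*(P*u0*Q)" by (simp add: algebra_simps)
  thus ?thesis by (simp add: hu hw ha0)
qed

lemma T4: assumes ha: "a = P*a*P" and hx: "x = P*x*Q"
  shows "d (a*x) = d a * x + a * d x"
  using L4[of a x] unfolding ha[symmetric] hx[symmetric] .

lemma lft: assumes "a = E*a*F" "E*E = E" shows "E*a = (a::'a)"
proof -
  have "E*a = E*(E*a*F)" using assms(1) by simp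
  also have "\<dots> = (E*E)*a*F" by (simp add: mult.assoc)
  finally show ?thesis using assms by simp
qed
lemma rgt: assumes "a = E*a*F" "F*F = F" shows "a*F = (a::'a)"
proof -
  have "a*F = (E*a*F)*F" using assms(1) by simp
  also have "\<dots> = E*a*(F*F)" by (simp add: mult.assoc)
  finally show ?thesis using assms by simp
qed

lemma T5: assumes ha: "a = P*a*P" and hb: "b = P*b*P"
  shows "d (a*b) = d a * b + a * d b"
proof -
  have ab: "a*b = P*(a*b)*P"
  proof -
    have "P*(a*b)*P = (P*a)*(b*P)" by (simp add: mult.assoc)
    thus ?thesis using lft[OF ha] rgt[OF hb] by simp
  qed
  obtain m0 where hm: "d (a*b) = P*m0*P" using T1[OF ab] by blast
  obtain a0 where ha0: "d a = P*a0*P" using T1[OF ha] by blast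
  obtain b0 where hb0: "d b = P*b0*P" using T1[OF hb] by blast
  define c where "c = d (a*b) - d a * b - a * d b"
  have cP: "c = c*P" unfolding c_def hm ha0 hb0 using rgt[OF hb] by (simp add: algebra_simps)
  have "c = 0"
  proof (rule primeQ)
    fix X
    define x where "x = P*X*Q"
    have x: "x = P*x*Q" by (simp add: x_def mult.assoc)
    have bx: "b*x = P*(b*x)*Q"
    proof -
      have "P*(b*x)*Q = (P*b)*(x*Q)" by (simp add: mult.assoc)
      also have "\<dots> = b*x" using lft[OF hb] rgt[OF x] by simp
      finally show ?thesis by simp
    qed
    have 1: "d (a*b*x) = d (a*b) * x + a*b * d x" by (rule T4[OF ab x])
    have 2: "d (b*x) = d b * x + b * d x" by (rule T4[OF hb x])
    have 3: "d (a*(b*x)) = d a * (b*x) + a * d (b*x)" by (rule T4[OF ha bx])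
    have "d (a*b) * x = d a * (b*x) + a * d (b*x) - a*b*d x"
      using 1 3 by (simp add: mult.assoc eq_diff_eq)
    also have "\<dots> = d a * b * x + a * d b * x" unfolding 2 by (simp add: algebra_simps)
    finally have "c * x = 0" unfolding c_def by (simp add: algebra_simps)
    have "c*X*Q = c*P*X*Q" using cP by simp
    also have "\<dots> = c*x" by (simp add: x_def mult.assoc)
    also have "\<dots> = 0" by fact
    finally show "c*X*Q = 0" .
  qed
  thus ?thesis unfolding c_def by (simp add: diff_eq_eq add.commute)
qed

lemma idemd: assumes EE: "E*E = E" shows "d E = d E * E + E * d E"
proof -
  have d1: "d 1 = 0" using dadd[of P Q] dP dQ PQ1 by simp
  have AB: "E*(1-E) = 0" "(1-E)*E = 0" using EE by (simp_all add: algebra_simps)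
  have dF: "d (1 - E) = - d E" using d1 by (simp add: ddiff)
  note h = cnd[OF AB, unfolded dF]
  let ?Z = "d E - d E * E - E * d E"
  have "d E * (1 - E) + (1 - E) * d E + (E * - d E + - d E * E) = ?Z + ?Z"
    by (simp add: algebra_simps)
  with h have "?Z + ?Z = 0" by simp
  hence "?Z = 0" by (rule tf2)
  thus ?thesis by (simp add: algebra_simps)
qed

lemma L6key: "let c = d (P*r*Q*(Q*s*P)) - d (P*r*Q)*(Q*s*P) - P*r*Q*d (Q*s*P) in
   c = c*(P*r*Q)*(Q*s*P)"
proof -
  obtain u0 where hu: "d (P*r*Q) = P*u0*Q" using L2 by blast
  obtain v0 where hv: "d (Q*s*P) = Q*v0*P" using pdz.L2[OF swapz] by blast
  have xy: "P*r*Q*(Q*s*P) = P*(r*Q*s)*P" by (simp add: mult.assoc)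
  have yx: "Q*s*P*(P*r*Q) = Q*(s*P*r)*Q" by (simp add: mult.assoc)
  obtain w0 where hw: "d (P*r*Q*(Q*s*P)) = P*w0*P" using L1[of "r*Q*s"] unfolding xy by blast
  obtain t0 where ht: "d (Q*s*P*(P*r*Q)) = Q*t0*Q" using pdz.L1[OF swapz, of "s*P*r"] unfolding yx by blast
  have hyxy: "d (Q*s*P*(P*r*Q*(Q*s*P))) = d (Q*s*P)*(P*r*Q*(Q*s*P)) + Q*s*P * d (P*r*Q*(Q*s*P))"
    using pdz.L3[OF swapz, of s "r*Q*s"] unfolding xy[symmetric] .
  define E where "E = P + P*r*Q + Q*s*P + Q*s*P*(P*r*Q) - P*r*Q*(Q*s*P) - Q*s*P*(P*r*Q*(Q*s*P))"
  have EE: "E*E = E" unfolding E_def by (simp add: algebra_simps)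
  have dE: "d E = P*u0*Q + Q*v0*P + Q*t0*Q - P*w0*P - (Q*v0*P*(P*r*Q*(Q*s*P)) + Q*s*P*(P*w0*P))"
    unfolding E_def ddiff dadd dP hyxy hu hv hw ht by simp
  have "P*(d E - (d E * E + E * d E))*P = 0" using idemd[OF EE] by simp
  moreover have "P*(d E - (d E * E + E * d E))*P =
     (P*w0*P - P*u0*Q*(Q*s*P) - P*r*Q*(Q*v0*P)) -
     (P*w0*P - P*u0*Q*(Q*s*P) - P*r*Q*(Q*v0*P))*(P*r*Q)*(Q*s*P)"
    unfolding dE unfolding E_def by (simp add: algebra_simps)
  ultimately show ?thesis unfolding Let_def hu hv hw by simp
qed

lemma L6: "d (P*r*Q*(Q*s*P)) = d (P*r*Q)*(Q*s*P) + P*r*Q*d (Q*s*P)"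
proof -
  define c where "c r' = d (P*r'*Q*(Q*s*P)) - d (P*r'*Q)*(Q*s*P) - P*r'*Q*d (Q*s*P)" for r'
  have key: "c r' = c r'*(P*r'*Q)*(Q*s*P)" for r' using L6key[of r' s] unfolding c_def Let_def .
  have e1: "P*(r+r)*Q*(Q*s*P) = P*r*Q*(Q*s*P) + P*r*Q*(Q*s*P)" by (simp add: algebra_simps)
  have e2: "P*(r+r)*Q = P*r*Q + P*r*Q" by (simp add: algebra_simps)
  have cc: "c (r+r) = c r + c r" unfolding c_def e1 e2 dadd by (simp add: algebra_simps dadd)
  have "c r + c r = (c r + c r)*(P*(r+r)*Q)*(Q*s*P)" using key[of "r+r"] unfolding cc .
  also have "\<dots> = (c r*(P*r*Q)*(Q*s*P) + c r*(P*r*Q)*(Q*s*P)) + (c r*(P*r*Q)*(Q*s*P) + c r*(P*r*Q)*(Q*s*P))"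
    by (simp add: algebra_simps)
  also have "\<dots> = (c r + c r) + (c r + c r)" using key[of r] by simp
  finally have "c r + c r = 0" by simp
  hence "c r = 0" by (rule tf2)
  thus ?thesis unfolding c_def by (simp add: diff_eq_eq add.commute)
qed

lemma dY: "d Y = d (P*Y*P) + d (P*Y*Q) + d (Q*Y*P) + d (Q*Y*Q)"
  using arg_cong[where f=d, OF dec[of Y]] by (simp add: dadd)

lemma DP: "d (P*r*P*Y) = d (P*r*P)*Y + P*r*P*d Y"
proof -
  have eY: "P*r*P*Y = P*r*P*(P*Y*P) + P*r*P*(P*Y*Q)"
  proof -
    have "P*r*P*(P*Y*P) + P*r*P*(P*Y*Q) = P*r*P*Y*(P+Q)" by (simp add: algebra_simps)
    thus ?thesis by (simp add: PQ1)
  qed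
  have 1: "d (P*r*P*(P*Y*P)) = d (P*r*P)*(P*Y*P) + P*r*P*d (P*Y*P)"
    by (rule T5) (simp_all add: mult.assoc)
  have 2: "d (P*r*P*(P*Y*Q)) = d (P*r*P)*(P*Y*Q) + P*r*P*d (P*Y*Q)"
    by (rule T4) (simp_all add: mult.assoc)
  obtain a0 where ha: "d (P*r*P) = P*a0*P" using L1 by blast
  obtain m where hm: "d (P*Y*P) = P*m*P" using L1 by blast
  obtain n where hn: "d (P*Y*Q) = P*n*Q" using L2 by blast
  obtain o1 where ho: "d (Q*Y*P) = Q*o1*P" using pdz.L2[OF swapz] by blast
  obtain q where hq: "d (Q*Y*Q) = Q*q*Q" using pdz.L1[OF swapz] by blast
  have "d (P*r*P*Y) = d (P*r*P)*(P*Y*P) + P*r*P*d (P*Y*P) + (d (P*r*P)*(P*Y*Q) + P*r*P*d (P*Y*Q))"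
    unfolding eY dadd 1 2 ..
  also have "\<dots> = d (P*r*P)*Y + P*r*P*d Y"
    unfolding dY[of Y] ha hm hn ho hq
    by (subst (3) dec[of Y], simp add: algebra_simps)
  finally show ?thesis .
qed

lemma DX: "d (P*r*Q*Y) = d (P*r*Q)*Y + P*r*Q*d Y"
proof -
  have eY: "P*r*Q*Y = P*r*Q*(Q*Y*P) + P*r*Q*(Q*Y*Q)"
  proof -
    have "P*r*Q*(Q*Y*P) + P*r*Q*(Q*Y*Q) = P*r*Q*Y*(P+Q)" by (simp add: algebra_simps)
    thus ?thesis by (simp add: PQ1)
  qed
  have 1: "d (P*r*Q*(Q*Y*P)) = d (P*r*Q)*(Q*Y*P) + P*r*Q*d (Q*Y*P)"
    by (rule L6)
  have 2: "d (P*r*Q*(Q*Y*Q)) = d (P*r*Q)*(Q*Y*Q) + P*r*Q*d (Q*Y*Q)"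
    by (rule L3)
  obtain a0 where ha: "d (P*r*Q) = P*a0*Q" using L2 by blast
  obtain m where hm: "d (P*Y*P) = P*m*P" using L1 by blast
  obtain n where hn: "d (P*Y*Q) = P*n*Q" using L2 by blast
  obtain o1 where ho: "d (Q*Y*P) = Q*o1*P" using pdz.L2[OF swapz] by blast
  obtain q where hq: "d (Q*Y*Q) = Q*q*Q" using pdz.L1[OF swapz] by blast
  have "d (P*r*Q*Y) = d (P*r*Q)*(Q*Y*P) + P*r*Q*d (Q*Y*P) + (d (P*r*Q)*(Q*Y*Q) + P*r*Q*d (Q*Y*Q))"
    unfolding eY dadd 1 2 ..
  also have "\<dots> = d (P*r*Q)*Y + P*r*Q*d Y"
    unfolding dY[of Y] ha hm hn ho hq
    by (subst (3) dec[of Y], simp add: algebra_simps)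
  finally show ?thesis .
qed

lemma deriv: "d (X*Y) = d X * Y + X * d Y"
proof -
  have "X*Y = P*X*P*Y + P*X*Q*Y + Q*X*P*Y + Q*X*Q*Y"
    by (subst dec[of X]) (simp add: algebra_simps)
  hence "d (X*Y) = d (P*X*P*Y) + d (P*X*Q*Y) + d (Q*X*P*Y) + d (Q*X*Q*Y)"
    by (simp add: dadd)
  also have "\<dots> = (d (P*X*P) + d (P*X*Q) + d (Q*X*P) + d (Q*X*Q)) * Y
     + (P*X*P + P*X*Q + Q*X*P + Q*X*Q) * d Y"
    unfolding DP DX pdz.DP[OF swapz] pdz.DX[OF swapz] by (simp add: algebra_simps)
  also have "\<dots> = d X * Y + X * d Y" using dY[of X] dec[of X] by simp
  finally show ?thesis .
qed

lemma is_der: "is_derivation d"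
  unfolding is_derivation_def using add deriv by blast

end

context pd begin

lemma C0: assumes h: "d P = P*a1*P + Q*a2*Q"
  shows "d P = P * d P * P" and "d Q = Q * d Q * Q"
proof -
  define b where "b = d Q"
  have h0: "d P * Q + Q * d P + (P * d Q + d Q * P) = 0" using cnd[of P Q] by simp
  hence hh: "(P*a1*P + Q*a2*Q) * Q + Q * (P*a1*P + Q*a2*Q) + (P * b + b * P) = 0"
    unfolding h b_def .
  have "Q*((P*a1*P + Q*a2*Q) * Q + Q * (P*a1*P + Q*a2*Q) + (P * b + b * P))*Q = Q*a2*Q + Q*a2*Q"
    by (simp add: algebra_simps)
  with hh have "Q*a2*Q + Q*a2*Q = 0" by simp
  hence q: "Q*a2*Q = 0" by (rule tf2)
  show "d P = P * d P * P" unfolding h q by (simp add: mult.assoc)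
  have "P*((P*a1*P + Q*a2*Q) * Q + Q * (P*a1*P + Q*a2*Q) + (P * b + b * P))*P = P*b*P + P*b*P"
    by (simp add: algebra_simps)
  with hh have "P*b*P + P*b*P = 0" by simp
  hence 1: "P*b*P = 0" by (rule tf2)
  have "P*((P*a1*P + Q*a2*Q) * Q + Q * (P*a1*P + Q*a2*Q) + (P * b + b * P))*Q = P*b*Q"
    by (simp add: algebra_simps)
  with hh have 2: "P*b*Q = 0" by simp
  have "Q*((P*a1*P + Q*a2*Q) * Q + Q * (P*a1*P + Q*a2*Q) + (P * b + b * P))*P = Q*b*P + Q*a2*Q*P"
    by (simp add: algebra_simps)
  with hh q have 3: "Q*b*P = 0" by simp
  have "b = Q*b*Q" using dec[of b] 1 2 3 by simp
  thus "d Q = Q * d Q * Q" unfolding b_def .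
qed

lemma C1: assumes ha: "d P = P*a*P" and hb: "d Q = Q*b*Q"
  shows "P*a*P*(P*r*Q) = P*r*Q*(Q*b*Q)"
proof -
  define y where "y = d (P*r*Q)"
  have dE: "d (P + P*r*Q) = P*a*P + y" by (simp add: dadd ha y_def)
  have dF: "d (Q - P*r*Q) = Q*b*Q - y" by (simp add: ddiff hb y_def)
  have AB: "(P + P*r*Q)*(Q - P*r*Q) = 0" "(Q - P*r*Q)*(P + P*r*Q) = 0" by (simp_all add: algebra_simps)
  note h = cnd[OF AB, unfolded dE dF]
  let ?S = "(P * a * P + y) * (Q - P * r * Q) + (Q - P * r * Q) * (P * a * P + y) +
    ((P + P * r * Q) * (Q * b * Q - y) + (Q * b * Q - y) * (P + P * r * Q))"
  have "P*?S*P = - ((P*y*P + P*r*Q*y*P) + (P*y*P + P*r*Q*y*P))" by (simp add: algebra_simps)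
  moreover have "P*?S*P = 0" using h by simp
  ultimately have "(P*y*P + P*r*Q*y*P) + (P*y*P + P*r*Q*y*P) = 0" by (metis neg_equal_0_iff_equal)
  hence "P*y*P + P*r*Q*y*P = 0" by (rule tf2)
  hence e1: "P*y*P = - (P*r*Q*y*P)" by (simp add: eq_neg_iff_add_eq_0)
  have "Q*?S*Q = (Q*y*Q - Q*y*P*r*Q) + (Q*y*Q - Q*y*P*r*Q)" by (simp add: algebra_simps)
  moreover have "Q*?S*Q = 0" using h by simp
  ultimately have "(Q*y*Q - Q*y*P*r*Q) + (Q*y*Q - Q*y*P*r*Q) = 0" by simp
  hence "Q*y*Q - Q*y*P*r*Q = 0" by (rule tf2)
  hence e2: "Q*y*Q = Q*y*P*r*Q" by simp
  have f1: "P*y*P*r*Q = - (P*r*Q*y*P*r*Q)"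
  proof -
    have "P*y*P*(r*Q) = - (P*r*Q*y*P)*(r*Q)" using e1 by simp
    thus ?thesis by (simp add: mult.assoc)
  qed
  have f2: "P*r*Q*y*Q = P*r*Q*y*P*r*Q"
  proof -
    have "P*r*(Q*y*Q) = P*r*(Q*y*P*r*Q)" using e2 by simp
    thus ?thesis by (simp add: mult.assoc)
  qed
  have "P*?S*Q = P*r*Q*(Q*b*Q) - P*a*P*(P*r*Q) - (P*y*P*r*Q + P*r*Q*y*Q) - (P*y*P*r*Q + P*r*Q*y*Q)"
    by (simp add: algebra_simps)
  also have "P*y*P*r*Q + P*r*Q*y*Q = 0" using f1 f2 by simp
  finally have "P*?S*Q = P*r*Q*(Q*b*Q) - P*a*P*(P*r*Q)" by simp
  moreover have "P*?S*Q = 0" using h by simp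
  ultimately show ?thesis by simp
qed

lemma C2: assumes ha: "d P = P*a*P" and hb: "d Q = Q*b*Q"
  shows "(P*a*P + Q*b*Q)*(P*X*P) = P*X*P*(P*a*P + Q*b*Q)"
proof -
  define c where "c = P*a*P*(P*X*P) - P*X*P*(P*a*P)"
  have "c = 0"
  proof (rule primeQ)
    fix Y
    have "c*Y*Q = P*a*P*(P*(X*P*Y)*Q) - P*X*P*(P*a*P*(P*Y*Q))"
      unfolding c_def by (simp add: algebra_simps)
    also have "\<dots> = P*(X*P*Y)*Q*(Q*b*Q) - P*X*P*(P*Y*Q*(Q*b*Q))"
      unfolding C1[OF ha hb] ..
    also have "\<dots> = 0" by (simp add: algebra_simps)
    finally show "c*Y*Q = 0" .
  qed
  thus ?thesis unfolding c_def by (simp add: algebra_simps)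
qed

lemma C1': assumes ha: "d P = P*a*P" and hb: "d Q = Q*b*Q"
  shows "(P*a*P + Q*b*Q)*(P*X*Q) = P*X*Q*(P*a*P + Q*b*Q)"
proof -
  have "(P*a*P + Q*b*Q)*(P*X*Q) = P*a*P*(P*X*Q)" by (simp add: algebra_simps)
  also have "\<dots> = P*X*Q*(Q*b*Q)" by (rule C1[OF ha hb])
  also have "\<dots> = P*X*Q*(P*a*P + Q*b*Q)" by (simp add: algebra_simps)
  finally show ?thesis .
qed

lemma Zcent: assumes ha: "d P = P*a*P" and hb: "d Q = Q*b*Q"
  shows "(P*a*P + Q*b*Q)*X = X*(P*a*P + Q*b*Q)"
proof -
  have s1: "(Q*b*Q + P*a*P)*(Q*X*Q) = Q*X*Q*(Q*b*Q + P*a*P)" by (rule pd.C2[OF swapd hb ha])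
  have s2: "(Q*b*Q + P*a*P)*(Q*X*P) = Q*X*P*(Q*b*Q + P*a*P)" by (rule pd.C1'[OF swapd hb ha])
  have "(P*a*P + Q*b*Q)*X = (P*a*P + Q*b*Q)*(P*X*P) + (P*a*P + Q*b*Q)*(P*X*Q)
     + (Q*b*Q + P*a*P)*(Q*X*P) + (Q*b*Q + P*a*P)*(Q*X*Q)"
    by (subst dec[of X]) (simp add: algebra_simps)
  also have "\<dots> = P*X*P*(P*a*P + Q*b*Q) + P*X*Q*(P*a*P + Q*b*Q)
     + Q*X*P*(Q*b*Q + P*a*P) + Q*X*Q*(Q*b*Q + P*a*P)"
    unfolding C2[OF ha hb] C1'[OF ha hb] s1 s2 ..
  also have "\<dots> = X*(P*a*P + Q*b*Q)"
    by (subst (5) dec[of X]) (simp add: algebra_simps)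
  finally show ?thesis .
qed

end

lemma zj_ad: "zj (\<lambda>X. T*X - X*(T::'a::ring_1))"
  unfolding zj_def
proof (intro allI impI, elim conjE)
  fix A B :: 'a assume AB: "A*B = 0" and BA: "B*A = 0"
  have 1: "A*(B*z) = 0" for z using AB by (metis mult.assoc mult_zero_left)
  have 2: "B*(A*z) = 0" for z using BA by (metis mult.assoc mult_zero_left)
  show "(T * A - A * T) * B + B * (T * A - A * T) + (A * (T * B - B * T) + (T * B - B * T) * A) = 0"
    by (simp add: algebra_simps 1 2 AB BA)
qed

lemma zj_diff: "zj f \<Longrightarrow> zj g \<Longrightarrow> zj (\<lambda>X. f X - g X)"
  unfolding zj_def
proof (intro allI impI)
  fix A B :: 'a assume f: "\<forall>A B. A * B = 0 \<and> B * A = 0 \<longrightarrow> f A * B + B * f A + (A * f B + f B * A) = 0"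
    and g: "\<forall>A B. A * B = 0 \<and> B * A = 0 \<longrightarrow> g A * B + B * g A + (A * g B + g B * A) = 0"
    and h: "A * B = 0 \<and> B * A = 0"
  have "(f A - g A) * B + B * (f A - g A) + (A * (f B - g B) + (f B - g B) * A)
     = (f A * B + B * f A + (A * f B + f B * A)) - (g A * B + B * g A + (A * g B + g B * A))"
    by (simp add: algebra_simps)
  also have "\<dots> = 0" using f g h by simp
  finally show "(f A - g A) * B + B * (f A - g A) + (A * (f B - g B) + (f B - g B) * A) = 0" .
qed

lemma zj_cent: assumes c: "\<And>X. Z*X = X*(Z::'a::ring_1)" shows "zj (\<lambda>X. Z*X)"
  unfolding zj_def
proof (intro allI impI, elim conjE)
  fix A B :: 'a assume AB: "A*B = 0" and BA: "B*A = 0"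
  have "Z * A * B + B * (Z * A) + (A * (Z * B) + Z * B * A) = Z*(A*B) + (B*Z)*A + (A*Z)*B + Z*(B*A)"
    by (simp add: algebra_simps)
  also have "\<dots> = Z*(A*B) + Z*(B*A) + Z*(A*B) + Z*(B*A)" using c by (simp add: mult.assoc)
  also have "\<dots> = 0" using AB BA by simp
  finally show "Z * A * B + B * (Z * A) + (A * (Z * B) + Z * B * A) = 0" .
qed

theorem corollary2p9:
  fixes \<phi> :: "'a::ring_1 \<Rightarrow> 'a" and P :: 'a
  assumes "prime_ring TYPE('a)"
    and "two_torsion_free TYPE('a)"
    and "P * P = P" and "P \<noteq> 0" and "P \<noteq> 1"
    and "additive \<phi>"
    and "\<forall>A B. A * B = 0 \<and> B * A = 0 \<longrightarrow> \<phi> A \<circ>\<^sub>J B + A \<circ>\<^sub>J \<phi> B = 0"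
  shows "(\<exists>\<delta> \<eta>. is_derivation \<delta> \<and> is_multiplier \<eta> \<and> (\<forall>X. \<phi> X = \<delta> X + \<eta> X))
       \<and> (\<phi> 1 = 0 \<longrightarrow> is_derivation \<phi>)"
proof -
  define Q where "Q = 1 - P"
  interpret pb P Q
  proof
    show "Q \<noteq> 0" using assms(5) by (simp add: Q_def)
  qed (use assms Q_def in auto)
  have zjphi: "zj \<phi>" using assms(7) unfolding zj_def jordan_prod_def by (simp add: add.assoc)
  have addphi: "\<phi> (a + b) = \<phi> a + \<phi> b" for a b using assms(6) unfolding additive_def by blast
  define p where "p = \<phi> P"
  define T where "T = Q*p*P - P*p*Q"
  define \<phi>1 where "\<phi>1 X = \<phi> X - (T*X - X*T)" for X
  have add1: "additive \<phi>1" unfolding additive_def \<phi>1_def by (simp add: addphi algebra_simps)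
  have zj1: "zj \<phi>1" unfolding \<phi>1_def by (rule zj_diff[OF zjphi zj_ad])
  interpret i1: pd P Q \<phi>1 by unfold_locales (rule add1, rule zj1)
  have "\<phi>1 P = P*p*P + Q*p*Q"
  proof -
    have "\<phi>1 P = p - (T*P - P*T)" unfolding \<phi>1_def p_def ..
    also have "\<dots> = P*p*P + Q*p*Q"
      unfolding T_def by (subst (1) dec[of p]) (simp add: algebra_simps)
    finally show ?thesis .
  qed
  from i1.C0[OF this] have ha: "\<phi>1 P = P*\<phi>1 P*P" and hb: "\<phi>1 Q = Q*\<phi>1 Q*Q" .
  define a where "a = \<phi>1 P"
  define b where "b = \<phi>1 Q"
  have ha': "\<phi>1 P = P*a*P" using ha unfolding a_def .
  have hb': "\<phi>1 Q = Q*b*Q" using hb unfolding b_def .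
  define Z where "Z = P*a*P + Q*b*Q"
  have Zc: "Z*X = X*Z" for X unfolding Z_def by (rule i1.Zcent[OF ha' hb'])
  have phi1: "\<phi> 1 = Z"
  proof -
    have "\<phi> 1 = \<phi>1 1" unfolding \<phi>1_def by simp
    also have "\<dots> = \<phi>1 P + \<phi>1 Q" using i1.dadd[of P Q] PQ1 by simp
    finally show ?thesis unfolding Z_def ha' hb' .
  qed
  define d where "d X = \<phi>1 X - Z*X" for X
  have addd: "additive d" unfolding additive_def d_def by (simp add: i1.dadd algebra_simps)
  have zjd: "zj d" unfolding d_def by (rule zj_diff[OF zj1 zj_cent[OF Zc]])
  interpret i2: pdz P Q d
  proof
    show "additive d" by (rule addd)
    show "zj d" by (rule zjd)
    show "d P = 0" unfolding d_def ha' Z_def by (simp add: algebra_simps)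
    show "d Q = 0" unfolding d_def hb' Z_def by (simp add: algebra_simps)
  qed
  have dder: "d (X*Y) = d X * Y + X * d Y" for X Y by (rule i2.deriv)
  define \<delta> where "\<delta> X = \<phi> X - Z*X" for X
  define \<eta> where "\<eta> X = Z*X" for X
  have \<delta>d: "\<delta> X = d X + (T*X - X*T)" for X unfolding \<delta>_def d_def \<phi>1_def by simp
  have der: "is_derivation \<delta>"
    unfolding is_derivation_def
  proof (intro conjI allI)
    show "additive \<delta>" unfolding additive_def \<delta>_def by (simp add: addphi algebra_simps)
    fix X Y show "\<delta> (X * Y) = \<delta> X * Y + X * \<delta> Y"
      unfolding \<delta>d dder by (simp add: algebra_simps)
  qed
  have mul: "is_multiplier \<eta>"
    unfolding is_multiplier_def additive_def \<eta>_def using Zc by (simp add: algebra_simps)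
  have sum: "\<phi> X = \<delta> X + \<eta> X" for X unfolding \<delta>_def \<eta>_def by simp
  have part2: "\<phi> 1 = 0 \<longrightarrow> is_derivation \<phi>"
  proof
    assume "\<phi> 1 = 0"
    hence "Z = 0" using phi1 by simp
    hence "\<phi> = \<delta>" unfolding \<delta>_def by auto
    thus "is_derivation \<phi>" using der by simp
  qed
  show ?thesis using der mul sum part2 by blast
qed

end
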